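(* $\mathrm{GenSpec}\preceq F_{\mathrm{weak}}$: for all graphs $G,H$, if $F_{\mathrm{weak}}(G)=F_{\mathrm{weak}}(H)$ then $\mathrm{Spec}(G)=\mathrm{Spec}(H)$ and $\mathrm{Spec}(\overline G)=\mathrm{Spec}(\overline H)$, where $\overline G$ denotes the complement graph.
   Context: Graphs are finite, simple and undirected with adjacency matrix $A$. $\mathrm{Spec}(G)$ is the multiset of eigenvalues of $A$. Let $\mu_1<\dots<\mu_m$ be the distinct eigenvalues, $P_i$ the orthogonal projection matrix onto the eigenspace of $\mu_i$, $P_*(x,y)=(P_1(x,y),\dots,P_m(x,y))$. Fürer's weak spectral invariant is $F_{\mathrm{weak}}(G)=\big(\mathrm{Spec}(G),\{\!\{(P_*(x,x),\{\!\{P_*(x,y)\}\!\}_{y\in V(G)})\}\!\}_{x\in V(G)}\big)$, where $\{\!\{\cdot\}\!\}$ denotes a multiset. $\mathrm{GenSpec}(G)=(\mathrm{Spec}(G),\mathrm{Spec}(\overline G))$ (the generalized spectrum). *)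

theory Defs
  imports "Jordan_Normal_Form.Char_Poly" "HOL-Computational_Algebra.Polynomial"
begin

text \<open>A finite simple graph with vertex set {0..<n}, given by a symmetric irreflexive
  edge relation E (only its values on {0..<n} matter).\<close>
definition simple_graph :: "nat \<Rightarrow> (nat \<Rightarrow> nat \<Rightarrow> bool) \<Rightarrow> bool" where
  "simple_graph n E \<longleftrightarrow> (\<forall>i<n. \<forall>j<n. E i j = E j i) \<and> (\<forall>i<n. \<not> E i i)"

definition compl_graph :: "(nat \<Rightarrow> nat \<Rightarrow> bool) \<Rightarrow> nat \<Rightarrow> nat \<Rightarrow> bool" where
  "compl_graph E = (\<lambda>i j. i \<noteq> j \<and> \<not> E i j)"

definition adj_mat :: "nat \<Rightarrow> (nat \<Rightarrow> nat \<Rightarrow> bool) \<Rightarrow> real mat" where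
  "adj_mat n E = mat n n (\<lambda>(i, j). if E i j then 1 else 0)"

definition Spec :: "nat \<Rightarrow> (nat \<Rightarrow> nat \<Rightarrow> bool) \<Rightarrow> real multiset" where
  "Spec n E = proots (char_poly (adj_mat n E))"

definition eigenspace :: "real mat \<Rightarrow> real \<Rightarrow> real vec set" where
  "eigenspace A mu = {v \<in> carrier_vec (dim_row A). A *\<^sub>v v = mu \<cdot>\<^sub>v v}"

definition eig_proj :: "real mat \<Rightarrow> real \<Rightarrow> real mat" where
  "eig_proj A mu = (THE P. P \<in> carrier_mat (dim_row A) (dim_row A) \<and> P * P = P \<and>
      transpose_mat P = P \<and> (\<lambda>v. P *\<^sub>v v) ` carrier_vec (dim_row A) = eigenspace A mu)"

definition distinct_eigs :: "nat \<Rightarrow> (nat \<Rightarrow> nat \<Rightarrow> bool) \<Rightarrow> real list" where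
  "distinct_eigs n E = sorted_list_of_set (set_mset (Spec n E))"

definition Pstar :: "nat \<Rightarrow> (nat \<Rightarrow> nat \<Rightarrow> bool) \<Rightarrow> nat \<Rightarrow> nat \<Rightarrow> real list" where
  "Pstar n E x y = map (\<lambda>mu. eig_proj (adj_mat n E) mu $$ (x, y)) (distinct_eigs n E)"

definition F_weak :: "nat \<Rightarrow> (nat \<Rightarrow> nat \<Rightarrow> bool) \<Rightarrow>
    real multiset \<times> (real list \<times> real list multiset) multiset" where
  "F_weak n E = (Spec n E,
     image_mset (\<lambda>x. (Pstar n E x x, image_mset (\<lambda>y. Pstar n E x y) (mset [0..<n]))) (mset [0..<n]))"

end

theory Submission
  imports Defs "Jordan_Normal_Form.Schur_Decomposition"
begin


interpretation m: map_poly_inj_comm_ring_hom complex_of_real ..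

lemma map_poly_of_real_prod:
  "map_poly complex_of_real (\<Prod>e\<leftarrow>es. [:-e,1:]) = (\<Prod>e\<leftarrow>es. [:-complex_of_real e,1:])"
proof (induction es)
  case (Cons a es)
  show ?case by (simp only: list.map prod_list.Cons m.hom_mult Cons.IH) simp
qed simp

lemma map_poly_of_real_inj:
  assumes "map_poly complex_of_real p = map_poly complex_of_real q"
  shows "p = q"
proof (rule poly_eqI)
  fix i
  have "coeff (map_poly complex_of_real p) i = coeff (map_poly complex_of_real q) i" using assms by simp
  thus "coeff p i = coeff q i" by (simp add: coeff_map_poly)
qed

lemma t_s1:
  fixes A :: "real mat" and v :: "complex vec" and a :: complex
  assumes v: "v \<in> carrier_vec n"
    and ev: "map_mat complex_of_real A *\<^sub>v v = a \<cdot>\<^sub>v v"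
  shows "(\<Sum>i<n. cnj (v$i) * (map_mat complex_of_real A *\<^sub>v v)$i) = a * (\<Sum>i<n. cnj (v$i) * v$i)"
  unfolding ev sum_distrib_left
proof (intro sum.cong refl)
  fix i assume "i \<in> {..<n}"
  hence "(a \<cdot>\<^sub>v v) $ i = a * v $ i" using v by simp
  thus "cnj (v $ i) * (a \<cdot>\<^sub>v v) $ i = a * (cnj (v $ i) * v $ i)" by simp
qed

lemma t_s2:
  fixes A :: "real mat" and v :: "complex vec" and a :: complex
  assumes A: "A \<in> carrier_mat n n" and v: "v \<in> carrier_vec n"
  shows "(\<Sum>i<n. cnj (v$i) * (map_mat complex_of_real A *\<^sub>v v)$i) = (\<Sum>i<n. \<Sum>j<n. cnj (v$i) * of_real (A$$(i,j)) * v$j)"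
proof (intro sum.cong refl)
  fix i assume "i \<in> {..<n}"
  hence i: "i < n" by simp
  have "(map_mat complex_of_real A *\<^sub>v v)$i = (\<Sum>j<n. of_real (A$$(i,j)) * v$j)"
    using A v i by (simp add: scalar_prod_def lessThan_atLeast0)
  thus "cnj (v$i) * (map_mat complex_of_real A *\<^sub>v v)$i = (\<Sum>j<n. cnj (v$i) * of_real (A$$(i,j)) * v$j)"
    by (simp add: sum_distrib_left mult.assoc)
qed


lemma hermitian_eig_real:
  fixes A :: "real mat" and v :: "complex vec" and a :: complex
  assumes A: "A \<in> carrier_mat n n" and sym: "\<And>i j. i<n \<Longrightarrow> j<n \<Longrightarrow> A $$ (i,j) = A $$ (j,i)"
    and v: "v \<in> carrier_vec n" "v \<noteq> 0\<^sub>v n"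
    and ev: "map_mat complex_of_real A *\<^sub>v v = a \<cdot>\<^sub>v v"
  shows "Im a = 0"
proof -
  let ?Ac = "map_mat complex_of_real A"
  define s where "s = (\<Sum>i<n. cnj (v$i) * (?Ac *\<^sub>v v)$i)"
  define N where "N = (\<Sum>i<n. cnj (v$i) * v$i)"
  have s1: "s = a * N" unfolding s_def N_def by (rule t_s1[OF v(1) ev])
  have s2: "s = (\<Sum>i<n. \<Sum>j<n. cnj (v$i) * of_real (A$$(i,j)) * v$j)"
    unfolding s_def by (rule t_s2[OF A v(1)])
  have "cnj s = (\<Sum>i<n. \<Sum>j<n. v$i * of_real (A$$(i,j)) * cnj (v$j))"
    unfolding s2 by simp
  also have "\<dots> = (\<Sum>j<n. \<Sum>i<n. v$i * of_real (A$$(i,j)) * cnj (v$j))"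
    by (rule sum.swap)
  also have "\<dots> = s" unfolding s2
  proof (intro sum.cong refl)
    fix i j assume "i \<in> {..<n}" "j \<in> {..<n}"
    hence "A$$(j,i) = A$$(i,j)" using sym by simp
    thus "v $ j * complex_of_real (A $$ (j, i)) * cnj (v $ i) = cnj (v $ i) * complex_of_real (A $$ (i, j)) * v $ j"
      by (simp add: ac_simps)
  qed
  finally have cs: "cnj s = s" .
  have Nr: "N = of_real (\<Sum>i<n. (cmod (v$i))^2)"
    unfolding N_def of_real_sum by (intro sum.cong refl) (metis complex_norm_square mult.commute)
  have "\<exists>i<n. v$i \<noteq> 0"
  proof (rule ccontr)
    assume "\<not> ?thesis"
    hence "v = 0\<^sub>v n" using v(1) by (intro eq_vecI) auto
    with v(2) show False by simp
  qed
  then obtain i where i: "i < n" "v $ i \<noteq> 0" by blast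
  have "(\<Sum>i<n. (cmod (v$i))^2) > 0"
  proof -
    have "(cmod (v$i))^2 \<le> (\<Sum>i<n. (cmod (v$i))^2)"
      using i by (intro member_le_sum) auto
    moreover have "cmod (v$i) > 0" using i(2) by simp
    hence "(cmod (v$i))^2 > 0" by (rule zero_less_power)
    ultimately show ?thesis by linarith
  qed
  hence N0: "N \<noteq> 0" unfolding Nr of_real_eq_0_iff by linarith
  have cN: "cnj N = N" unfolding Nr by simp
  have "cnj a * N = cnj (a * N)" using cN by simp
  also have "\<dots> = cnj s" using s1 by simp
  also have "\<dots> = s" by (rule cs)
  also have "\<dots> = a * N" by (rule s1)
  finally have "cnj a * N = a * N" .
  hence "cnj a = a" using mult_right_cancel[OF N0] by blast
  hence "Im (cnj a) = Im a" by (rule arg_cong)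
  hence "- Im a = Im a" unfolding cnj.sel(2) .
  thus ?thesis by linarith
qed

lemma real_sym_split:
  fixes A :: "real mat"
  assumes A: "A \<in> carrier_mat n n" and sym: "\<And>i j. i<n \<Longrightarrow> j<n \<Longrightarrow> A $$ (i,j) = A $$ (j,i)"
  shows "\<exists>es. char_poly A = (\<Prod>e\<leftarrow>es. [:-e,1:])"
proof -
  let ?Ac = "map_mat complex_of_real A"
  have Ac: "?Ac \<in> carrier_mat n n" using A by simp
  have cp: "char_poly ?Ac = map_poly complex_of_real (char_poly A)"
    by (rule of_real_hom.char_poly_hom[OF A])
  obtain as where as: "char_poly ?Ac = (\<Prod>a\<leftarrow>as. [:-a,1:])"
    using char_poly_factorized[OF Ac] by blast
  have re: "Im a = 0" if a: "a \<in> set as" for a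
  proof -
    have "poly (char_poly ?Ac) a = 0" unfolding as using a
      by (simp add: poly_prod_list prod_list_zero_iff) 
    hence "eigenvalue ?Ac a" using eigenvalue_root_char_poly[OF Ac] by simp
    then obtain v where "eigenvector ?Ac v a" unfolding eigenvalue_def by blast
    hence "v \<in> carrier_vec n" "v \<noteq> 0\<^sub>v n" "?Ac *\<^sub>v v = a \<cdot>\<^sub>v v"
      unfolding eigenvector_def using Ac by auto
    thus ?thesis using hermitian_eig_real[OF A sym] by blast
  qed
  define bs where "bs = map Re as"
  have asbs: "as = map complex_of_real bs"
    unfolding bs_def using re by (induction as) (auto simp: complex_eq_iff)
  have "map_poly complex_of_real (char_poly A) = (\<Prod>a\<leftarrow>map complex_of_real bs. [:-a,1:])"
    using cp as asbs by simp
  also have "\<dots> = (\<Prod>b\<leftarrow>bs. [:-complex_of_real b,1:])" by (simp add: comp_def)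
  also have "\<dots> = map_poly complex_of_real (\<Prod>e\<leftarrow>bs. [:-e,1:])"
    by (rule map_poly_of_real_prod[symmetric])
  finally have "char_poly A = (\<Prod>e\<leftarrow>bs. [:-e,1:])" by (rule map_poly_of_real_inj)
  thus ?thesis by blast
qed



definition lin :: "real mat \<Rightarrow> real \<Rightarrow> real mat" where
  "lin A e = A - e \<cdot>\<^sub>m 1\<^sub>m (dim_row A)"

fun prodm :: "real mat \<Rightarrow> real list \<Rightarrow> real mat" where
  "prodm A [] = 1\<^sub>m (dim_row A)"
| "prodm A (e#es) = lin A e * prodm A es"

lemma dim_lin[simp]: "dim_row (lin A e) = dim_row A" "dim_col (lin A e) = dim_row A"
  unfolding lin_def by auto

lemma zero_mult_mat_vec: "v \<in> carrier_vec m \<Longrightarrow> 0\<^sub>m n m *\<^sub>v v = 0\<^sub>v n"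
  by (intro eq_vecI) (auto simp: scalar_prod_def)

lemma lin_carrier[simp]: "A \<in> carrier_mat n n \<Longrightarrow> lin A e \<in> carrier_mat n n"
  unfolding lin_def by auto

lemma prodm_carrier[simp]: "A \<in> carrier_mat n n \<Longrightarrow> prodm A es \<in> carrier_mat n n"
  by (induction es) (auto intro: mult_carrier_mat[of _ n n _ n])

lemma mat_eq_by_vec:
  fixes A B :: "'a :: comm_ring_1 mat"
  assumes A: "A \<in> carrier_mat n m" and B: "B \<in> carrier_mat n m"
    and eq: "\<And>v. v \<in> carrier_vec m \<Longrightarrow> A *\<^sub>v v = B *\<^sub>v v"
  shows "A = B"
proof (rule eq_matI)
  fix i j assume i: "i < dim_row B" and j: "j < dim_col B"
  have "(A *\<^sub>v unit_vec m j) $ i = (B *\<^sub>v unit_vec m j) $ i" using eq by simp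
  thus "A $$ (i,j) = B $$ (i,j)" using A B i j by simp
qed (use A B in auto)

lemma lin_index: assumes A: "A \<in> carrier_mat n n" and "j < n" "l < n"
  shows "lin A c $$ (j,l) = A $$ (j,l) - (if j = l then c else 0)"
  using assms unfolding lin_def by auto

lemma prodm_snoc: assumes A: "A \<in> carrier_mat n n"
  shows "prodm A (xs @ [e]) = prodm A xs * lin A e"
  using A
proof (induction xs)
  case Nil
  have L: "lin A e \<in> carrier_mat n n" using A by simp
  have d: "dim_row A = n" using A by simp
  have "lin A e * 1\<^sub>m n = lin A e" by (rule right_mult_one_mat[OF L])
  moreover have "1\<^sub>m n * lin A e = lin A e" by (rule left_mult_one_mat[OF L])
  ultimately show ?case using d by simp
next
  case (Cons x xs)
  have "prodm A ((x # xs) @ [e]) = lin A x * (prodm A xs * lin A e)" using Cons by simp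
  also have "\<dots> = (lin A x * prodm A xs) * lin A e"
    by (rule assoc_mult_mat[symmetric, of _ n n _ n _ n], insert Cons.prems, auto)
  finally show ?case by simp
qed

lemma ut_step:
  fixes B :: "real mat"
  assumes B: "B \<in> carrier_mat n n" and ut: "upper_triangular B" and k: "k < n"
    and v: "v \<in> carrier_vec n" and vz: "\<And>j. Suc k \<le> j \<Longrightarrow> j < n \<Longrightarrow> v $ j = 0"
    and j: "k \<le> j" "j < n"
  shows "(lin B (B $$ (k,k)) *\<^sub>v v) $ j = 0"
proof -
  have "(lin B (B $$ (k,k)) *\<^sub>v v) $ j = (\<Sum>l\<in>{0..<n}. lin B (B $$ (k,k)) $$ (j,l) * v $ l)"
    using B v j by (simp add: scalar_prod_def)
  also have "\<dots> = 0"
  proof (rule sum.neutral, intro ballI)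
    fix l assume l: "l \<in> {0..<n}"
    have e: "lin B (B $$ (k,k)) $$ (j,l) = B $$ (j,l) - (if j = l then B $$ (k,k) else 0)"
      using lin_index[OF B] j l by simp
    show "lin B (B $$ (k,k)) $$ (j,l) * v $ l = 0"
    proof (cases "l < j")
      case True
      hence "B $$ (j,l) = 0" using ut B j unfolding upper_triangular_def by auto
      thus ?thesis using e True by simp
    next
      case False
      show ?thesis
      proof (cases "l = j")
        case True
        show ?thesis
        proof (cases "j = k")
          case True thus ?thesis using e \<open>l = j\<close> by simp
        next
          case False thus ?thesis using vz[of l] j l \<open>l = j\<close> by simp
        qed
      next
        case False
        thus ?thesis using vz[of l] j l \<open>\<not> l < j\<close> by simp
      qed
    qed
  qed
  finally show ?thesis .
qed

lemma ut_CH: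
  fixes B :: "real mat"
  assumes B: "B \<in> carrier_mat n n" and ut: "upper_triangular B"
  shows "prodm B (diag_mat B) = 0\<^sub>m n n"
proof -
  let ?es = "diag_mat B"
  have len: "length ?es = n" using B unfolding diag_mat_def by simp
  have nth: "?es ! k = B $$ (k,k)" if "k < n" for k using B that unfolding diag_mat_def by simp
  have main: "prodm B (take k ?es) *\<^sub>v v = 0\<^sub>v n"
    if "k \<le> n" "v \<in> carrier_vec n" "\<And>j. k \<le> j \<Longrightarrow> j < n \<Longrightarrow> v $ j = 0" for k v
    using that
  proof (induction k arbitrary: v)
    case 0
    hence "v = 0\<^sub>v n" by (intro eq_vecI) auto
    thus ?case using B by simp
  next
    case (Suc k)
    let ?w = "lin B (B $$ (k,k)) *\<^sub>v v"
    have w: "?w \<in> carrier_vec n" by (rule mult_mat_vec_carrier[OF lin_carrier[OF B] Suc.prems(2)])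
    have wz: "?w $ j = 0" if "k \<le> j" "j < n" for j
      using ut_step[OF B ut _ Suc.prems(2)] Suc.prems(1,3) that by simp
    have IH: "prodm B (take k ?es) *\<^sub>v ?w = 0\<^sub>v n"
      using Suc.IH[OF _ w wz] Suc.prems(1) by simp
    have tk: "take (Suc k) ?es = take k ?es @ [B $$ (k,k)]"
      using Suc.prems(1) len nth by (simp add: take_Suc_conv_app_nth)
    have "prodm B (take (Suc k) ?es) *\<^sub>v v = (prodm B (take k ?es) * lin B (B $$ (k,k))) *\<^sub>v v"
      unfolding tk prodm_snoc[OF B] ..
    also have "\<dots> = prodm B (take k ?es) *\<^sub>v ?w"
      by (rule assoc_mult_mat_vec[of _ n n _ n], insert B Suc.prems(2), auto)
    finally show ?case using IH by simp
  qed
  show ?thesis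
  proof (rule mat_eq_by_vec[of _ n n])
    fix v :: "real vec" assume "v \<in> carrier_vec n"
    thus "prodm B ?es *\<^sub>v v = 0\<^sub>m n n *\<^sub>v v"
      using main[of n v] len zero_mult_mat_vec[of v n n] by simp
  qed (use B in auto)
qed


lemma lin_sim:
  assumes P: "P \<in> carrier_mat n n" and B: "B \<in> carrier_mat n n" and Q: "Q \<in> carrier_mat n n"
    and PQ: "P * Q = 1\<^sub>m n" and A: "A = P * B * Q"
  shows "lin A e = P * lin B e * Q"
proof -
  have dA: "dim_row A = n" using A P by simp
  have dB: "dim_row B = n" using B by simp
  have "P * lin B e = P * B - e \<cdot>\<^sub>m P"
    unfolding lin_def dB
    by (subst mult_minus_distrib_mat[OF P B], insert P, auto simp: mult_smult_distrib[OF P])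
  hence "P * lin B e * Q = (P * B - e \<cdot>\<^sub>m P) * Q" by simp
  also have "\<dots> = P * B * Q - (e \<cdot>\<^sub>m P) * Q"
    by (rule minus_mult_distrib_mat[of _ n n], insert P B Q, auto)
  also have "(e \<cdot>\<^sub>m P) * Q = e \<cdot>\<^sub>m 1\<^sub>m n"
    unfolding mult_smult_assoc_mat[OF P Q] PQ ..
  finally have "P * lin B e * Q = P * B * Q - e \<cdot>\<^sub>m 1\<^sub>m n" .
  thus ?thesis unfolding lin_def dA by (simp add: A)
qed

lemma QPX: fixes P Q X :: "real mat" assumes P: "P \<in> carrier_mat n n" and Q: "Q \<in> carrier_mat n n" and QP: "Q * P = 1\<^sub>m n"
  and X: "X \<in> carrier_mat n m"
  shows "Q * (P * X) = X"
proof -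
  have "Q * (P * X) = (Q * P) * X" by (rule assoc_mult_mat[symmetric, OF Q P X])
  also have "\<dots> = 1\<^sub>m n * X" using QP by simp
  also have "\<dots> = X" by (rule left_mult_one_mat[OF X])
  finally show ?thesis .
qed

lemma prodm_sim:
  assumes P: "P \<in> carrier_mat n n" and B: "B \<in> carrier_mat n n" and Q: "Q \<in> carrier_mat n n"
    and PQ: "P * Q = 1\<^sub>m n" and QP: "Q * P = 1\<^sub>m n" and A: "A = P * B * Q"
  shows "prodm A xs = P * prodm B xs * Q"
proof (induction xs)
  case Nil
  have dA: "dim_row A = n" using A P by simp
  have dB: "dim_row B = n" using B by simp
  show ?case using dA dB PQ P by simp
next
  case (Cons e xs)
  have L: "lin B e \<in> carrier_mat n n" and R: "prodm B xs \<in> carrier_mat n n" using B by auto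
  have "prodm A (e # xs) = (P * lin B e * Q) * (P * prodm B xs * Q)"
    using Cons lin_sim[OF P B Q PQ A] by simp
  also have "\<dots> = (P * lin B e) * (Q * (P * prodm B xs * Q))"
    by (rule assoc_mult_mat[of _ n n _ n _ n], insert P Q L R, auto)
  also have "P * prodm B xs * Q = P * (prodm B xs * Q)"
    by (rule assoc_mult_mat[OF P R Q])
  also have "Q * (P * (prodm B xs * Q)) = prodm B xs * Q"
    by (rule QPX[OF P Q QP], insert R Q, auto)
  also have "(P * lin B e) * (prodm B xs * Q) = P * (lin B e * (prodm B xs * Q))"
    by (rule assoc_mult_mat[of _ n n _ n _ n], insert P Q L R, auto)
  also have "lin B e * (prodm B xs * Q) = (lin B e * prodm B xs) * Q"
    by (rule assoc_mult_mat[symmetric, OF L R Q])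
  also have "P * ((lin B e * prodm B xs) * Q) = (P * (lin B e * prodm B xs)) * Q"
    by (rule assoc_mult_mat[symmetric, of _ n n _ n _ n], insert P Q L R, auto)
  finally show ?case by simp
qed

lemma CH_sym:
  fixes A :: "real mat"
  assumes A: "A \<in> carrier_mat n n" and sp: "char_poly A = (\<Prod>e\<leftarrow>es. [:-e,1:])"
  shows "prodm A es = 0\<^sub>m n n"
proof -
  obtain B P Q where sd: "schur_decomposition A es = (B,P,Q)" by (cases "schur_decomposition A es") auto
  from schur_decomposition[OF A sp sd]
  have sim: "similar_mat_wit A B P Q" and ut: "upper_triangular B" and dg: "diag_mat B = es" by auto
  from sim A have P: "P \<in> carrier_mat n n" and B: "B \<in> carrier_mat n n" and Q: "Q \<in> carrier_mat n n"
    and PQ: "P * Q = 1\<^sub>m n" and QP: "Q * P = 1\<^sub>m n" and AA: "A = P * B * Q"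
    unfolding similar_mat_wit_def Let_def by auto
  have "prodm A es = P * prodm B es * Q" by (rule prodm_sim[OF P B Q PQ QP AA])
  also have "prodm B es = 0\<^sub>m n n" using ut_CH[OF B ut] dg by simp
  finally show ?thesis using P Q by simp
qed



context
  fixes A :: "real mat" and n :: nat
  assumes A: "A \<in> carrier_mat n n"
begin

lemma dA: "dim_row A = n" using A by simp

lemma L[simp]: "lin A e \<in> carrier_mat n n" using A by simp
lemma Pm[simp]: "prodm A xs \<in> carrier_mat n n" using A by simp

lemma lin_vec: "v \<in> carrier_vec n \<Longrightarrow> lin A e *\<^sub>v v = A *\<^sub>v v - e \<cdot>\<^sub>v v"
  unfolding lin_def dA using A
  by (subst minus_mult_distrib_mat_vec[of _ n n], auto)

lemma comm_lin: assumes X: "X \<in> carrier_mat n n" and XA: "X * A = A * X"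
  shows "X * lin A a = lin A a * X"
proof -
  have 1: "X * lin A a = X * A - X * (a \<cdot>\<^sub>m 1\<^sub>m n)"
    unfolding lin_def dA by (rule mult_minus_distrib_mat[OF X A], auto)
  have 2: "X * (a \<cdot>\<^sub>m 1\<^sub>m n) = a \<cdot>\<^sub>m X"
    unfolding mult_smult_distrib[OF X one_carrier_mat] using right_mult_one_mat[OF X] by simp
  have 3: "lin A a * X = A * X - (a \<cdot>\<^sub>m 1\<^sub>m n) * X"
    unfolding lin_def dA by (rule minus_mult_distrib_mat[OF A _ X], auto)
  have 4: "(a \<cdot>\<^sub>m 1\<^sub>m n) * X = a \<cdot>\<^sub>m X"
    unfolding mult_smult_assoc_mat[OF one_carrier_mat X] using left_mult_one_mat[OF X] by simp
  show ?thesis unfolding 1 2 3 4 XA ..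
qed

lemma lin_comm_A: "lin A a * A = A * lin A a"
  using comm_lin[OF A refl] by simp

lemma prodm_comm_A: "prodm A xs * A = A * prodm A xs"
proof (induction xs)
  case Nil thus ?case using A dA by simp
next
  case (Cons x xs)
  have "prodm A (x # xs) * A = lin A x * (prodm A xs * A)"
    by (simp, rule assoc_mult_mat[of _ n n _ n _ n], auto simp: A)
  also have "\<dots> = lin A x * (A * prodm A xs)" using Cons by simp
  also have "\<dots> = (lin A x * A) * prodm A xs"
    by (rule assoc_mult_mat[symmetric, of _ n n _ n _ n], auto simp: A)
  also have "\<dots> = (A * lin A x) * prodm A xs" by (simp add: lin_comm_A)
  also have "\<dots> = A * prodm A (x # xs)"
    by (simp, rule assoc_mult_mat[of _ n n _ n _ n], auto simp: A)
  finally show ?case .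
qed

lemma lin_prodm_comm: "lin A a * prodm A xs = prodm A xs * lin A a"
  using comm_lin[OF Pm prodm_comm_A] by simp

lemma lin_lin_comm: "lin A a * lin A b = lin A b * lin A a"
  using comm_lin[OF L lin_comm_A] by simp

lemma prodm_remove1: "e \<in> set xs \<Longrightarrow> prodm A xs = lin A e * prodm A (remove1 e xs)"
proof (induction xs)
  case Nil thus ?case by simp
next
  case (Cons x xs)
  show ?case
  proof (cases "x = e")
    case True thus ?thesis by simp
  next
    case False
    hence e: "e \<in> set xs" using Cons by simp
    have "prodm A (x # xs) = lin A x * (lin A e * prodm A (remove1 e xs))" using Cons.IH[OF e] by simp
    also have "\<dots> = (lin A x * lin A e) * prodm A (remove1 e xs)"
      by (rule assoc_mult_mat[symmetric, of _ n n _ n _ n], auto)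
    also have "\<dots> = (lin A e * lin A x) * prodm A (remove1 e xs)" by (simp add: lin_lin_comm)
    also have "\<dots> = lin A e * (lin A x * prodm A (remove1 e xs))"
      by (rule assoc_mult_mat[of _ n n _ n _ n], auto)
    finally show ?thesis using False by simp
  qed
qed

lemma prodm_perm: "mset xs = mset ys \<Longrightarrow> prodm A xs = prodm A ys"
proof (induction xs arbitrary: ys)
  case Nil thus ?case by simp
next
  case (Cons x xs)
  have x: "x \<in> set ys" using Cons.prems by (metis list.set_intros(1) set_mset_mset)
  from Cons.prems have "mset ys - {#x#} = mset xs" by (metis add_mset_remove_trivial mset.simps(2))
  hence "mset xs = mset (remove1 x ys)" by simp
  hence "prodm A xs = prodm A (remove1 x ys)" by (rule Cons.IH)
  thus ?case using prodm_remove1[OF x] by simp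
qed

lemma prodm_vec: "v \<in> carrier_vec n \<Longrightarrow> prodm A (x # xs) *\<^sub>v v = lin A x *\<^sub>v (prodm A xs *\<^sub>v v)"
  by (simp, rule assoc_mult_mat_vec[of _ n n _ n], auto)

lemma prodm_eigen: assumes v: "v \<in> carrier_vec n" and ev: "A *\<^sub>v v = mu \<cdot>\<^sub>v v"
  shows "prodm A xs *\<^sub>v v = (\<Prod>x\<leftarrow>xs. mu - x) \<cdot>\<^sub>v v"
proof (induction xs)
  case Nil thus ?case using v dA by simp
next
  case (Cons x xs)
  have "prodm A (x # xs) *\<^sub>v v = lin A x *\<^sub>v ((\<Prod>x\<leftarrow>xs. mu - x) \<cdot>\<^sub>v v)"
    using prodm_vec[OF v] Cons by simp
  also have "\<dots> = (\<Prod>x\<leftarrow>xs. mu - x) \<cdot>\<^sub>v (lin A x *\<^sub>v v)"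
    by (rule mult_mat_vec[of _ n n], insert v, auto)
  also have "lin A x *\<^sub>v v = (mu - x) \<cdot>\<^sub>v v"
    unfolding lin_vec[OF v] ev using v by (intro eq_vecI) (auto simp: algebra_simps)
  finally show ?case using v by (simp add: smult_smult_assoc mult.commute)
qed

end



lemma smult_mat_vec: fixes M :: "real mat"
  assumes "M \<in> carrier_mat n m" "v \<in> carrier_vec m"
  shows "(k \<cdot>\<^sub>m M) *\<^sub>v v = k \<cdot>\<^sub>v (M *\<^sub>v v)"
  using assms by (intro eq_vecI) (auto simp: scalar_prod_def sum_distrib_left mult.assoc)

lemma transpose_smult_mat: "transpose_mat (k \<cdot>\<^sub>m M) = k \<cdot>\<^sub>m transpose_mat M"
  by (intro eq_matI) auto

lemma vec_self_zero: fixes w :: "real vec"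
  assumes w: "w \<in> carrier_vec n" and z: "w \<bullet> w = 0"
  shows "w = 0\<^sub>v n"
proof (intro eq_vecI)
  fix i assume "i < dim_vec (0\<^sub>v n :: real vec)"
  hence i: "i < n" by simp
  have "(\<Sum>k\<in>{0..<n}. w $ k * w $ k) = 0" using z w by (simp add: scalar_prod_def)
  hence "\<forall>k\<in>{0..<n}. w $ k * w $ k = 0" by (subst sum_nonneg_eq_0_iff[symmetric]) auto
  hence "w $ i * w $ i = 0" using i by simp
  thus "w $ i = 0\<^sub>v n $ i" using i by simp
qed (use w in auto)

lemma vec_minus_zero: fixes x y :: "real vec"
  assumes "x \<in> carrier_vec n" "y \<in> carrier_vec n" "x - y = 0\<^sub>v n"
  shows "x = y"
proof (intro eq_vecI)
  fix i assume "i < dim_vec y"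
  hence i: "i < n" using assms by simp
  have "(x - y) $ i = 0" using assms(3) i by simp
  moreover have "(x - y) $ i = x $ i - y $ i" using assms(1,2) i by simp
  ultimately show "x $ i = y $ i" by simp
qed (use assms in auto)

lemma smult_vec_zero: fixes w :: "real vec"
  assumes w: "w \<in> carrier_vec n" and z: "c \<cdot>\<^sub>v w = 0\<^sub>v n" and c: "c \<noteq> 0"
  shows "w = 0\<^sub>v n"
proof (intro eq_vecI)
  fix i assume "i < dim_vec (0\<^sub>v n :: real vec)"
  hence i: "i < n" by simp
  have "(c \<cdot>\<^sub>v w) $ i = 0" using z i by simp
  hence "c * w $ i = 0" using w i by simp
  thus "w $ i = 0\<^sub>v n $ i" using c i by simp
qed (use w in auto)

context
  fixes A :: "real mat" and n :: nat
  assumes A: "A \<in> carrier_mat n n" and symA: "transpose_mat A = A"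
begin

lemma symA_ij: "i < n \<Longrightarrow> j < n \<Longrightarrow> A $$ (j,i) = A $$ (i,j)"
  using symA A by (metis carrier_matD(1) carrier_matD(2) index_transpose_mat(1))

lemma transpose_lin: "transpose_mat (lin A e) = lin A e"
proof (rule eq_matI)
  fix i j assume "i < dim_row (lin A e)" "j < dim_col (lin A e)"
  hence i: "i < n" and j: "j < n" using A by auto
  show "transpose_mat (lin A e) $$ (i, j) = lin A e $$ (i, j)"
    using i j A by (simp add: lin_index[OF A] symA_ij)
qed (use A in auto)

lemma transpose_prodm: "transpose_mat (prodm A xs) = prodm A xs"
proof (induction xs)
  case Nil thus ?case by simp
next
  case (Cons x xs)
  have "transpose_mat (prodm A (x # xs)) = transpose_mat (prodm A xs) * transpose_mat (lin A x)"
    by (simp, rule transpose_mult[of _ n n _ n], auto simp: A)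
  also have "\<dots> = prodm A xs * lin A x" using Cons transpose_lin by simp
  also have "\<dots> = prodm A (x # xs)" using lin_prodm_comm[OF A] by simp
  finally show ?case .
qed

lemma kernel_sq: assumes v: "v \<in> carrier_vec n" and z: "lin A e *\<^sub>v (lin A e *\<^sub>v v) = 0\<^sub>v n"
  shows "lin A e *\<^sub>v v = 0\<^sub>v n"
proof -
  let ?w = "lin A e *\<^sub>v v"
  have w: "?w \<in> carrier_vec n" by (rule mult_mat_vec_carrier[OF L[OF A] v])
  have "(transpose_mat (lin A e) *\<^sub>v ?w) \<bullet> v = ?w \<bullet> (lin A e *\<^sub>v v)"
    by (rule transpose_vec_mult_scalar[OF L[OF A] v w])
  hence "?w \<bullet> ?w = 0" unfolding transpose_lin z using v by simp
  thus ?thesis by (rule vec_self_zero[OF w])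
qed

lemma prodm_remdups_vec:
  assumes "v \<in> carrier_vec n" and "prodm A xs *\<^sub>v v = 0\<^sub>v n"
  shows "prodm A (remdups xs) *\<^sub>v v = 0\<^sub>v n"
  using assms
proof (induction xs arbitrary: v)
  case Nil thus ?case by simp
next
  case (Cons x xs)
  have h: "lin A x *\<^sub>v (prodm A xs *\<^sub>v v) = 0\<^sub>v n" using Cons.prems prodm_vec[OF A] by simp
  show ?case
  proof (cases "x \<in> set xs")
    case True
    let ?u = "prodm A (remove1 x xs) *\<^sub>v v"
    have u: "?u \<in> carrier_vec n" by (rule mult_mat_vec_carrier[OF Pm[OF A] Cons.prems(1)])
    have pv: "prodm A xs *\<^sub>v v = lin A x *\<^sub>v ?u"
      unfolding prodm_remove1[OF A True]
      by (rule assoc_mult_mat_vec[of _ n n _ n], insert Cons.prems(1) A, auto)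
    have "lin A x *\<^sub>v ?u = 0\<^sub>v n" using kernel_sq[OF u] h pv by simp
    hence "prodm A xs *\<^sub>v v = 0\<^sub>v n" using pv by simp
    from Cons.IH[OF Cons.prems(1) this] show ?thesis using True by simp
  next
    case False
    let ?v' = "lin A x *\<^sub>v v"
    have v': "?v' \<in> carrier_vec n" by (rule mult_mat_vec_carrier[OF L[OF A] Cons.prems(1)])
    have "lin A x *\<^sub>v (prodm A xs *\<^sub>v v) = (lin A x * prodm A xs) *\<^sub>v v"
      by (rule assoc_mult_mat_vec[symmetric, of _ n n _ n], insert Cons.prems(1) A, auto)
    also have "\<dots> = (prodm A xs * lin A x) *\<^sub>v v" using lin_prodm_comm[OF A] by simp
    also have "\<dots> = prodm A xs *\<^sub>v ?v'"
      by (rule assoc_mult_mat_vec[of _ n n _ n], insert Cons.prems(1) A, auto)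
    finally have "prodm A xs *\<^sub>v ?v' = 0\<^sub>v n" using h by simp
    from Cons.IH[OF v' this] have z: "prodm A (remdups xs) *\<^sub>v ?v' = 0\<^sub>v n" .
    have "prodm A (remdups (x # xs)) *\<^sub>v v = lin A x *\<^sub>v (prodm A (remdups xs) *\<^sub>v v)"
      using False prodm_vec[OF A Cons.prems(1)] by simp
    also have "\<dots> = (lin A x * prodm A (remdups xs)) *\<^sub>v v"
      by (rule assoc_mult_mat_vec[symmetric, of _ n n _ n], insert Cons.prems(1) A, auto)
    also have "\<dots> = (prodm A (remdups xs) * lin A x) *\<^sub>v v" using lin_prodm_comm[OF A] by simp
    also have "\<dots> = prodm A (remdups xs) *\<^sub>v ?v'"
      by (rule assoc_mult_mat_vec[of _ n n _ n], insert Cons.prems(1) A, auto)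
    finally show ?thesis using z by simp
  qed
qed

lemma annihil_distinct:
  assumes sp: "char_poly A = (\<Prod>e\<leftarrow>es. [:-e,1:])"
  shows "prodm A (sorted_list_of_set (set es)) = 0\<^sub>m n n"
proof -
  have "prodm A es = 0\<^sub>m n n" by (rule CH_sym[OF A sp])
  hence z: "prodm A (remdups es) *\<^sub>v v = 0\<^sub>v n" if "v \<in> carrier_vec n" for v
  proof -
    have "prodm A es *\<^sub>v v = 0\<^sub>v n" using \<open>prodm A es = 0\<^sub>m n n\<close> zero_mult_mat_vec[OF that] by simp
    thus ?thesis by (rule prodm_remdups_vec[OF that])
  qed
  have "mset (sorted_list_of_set (set es)) = mset (remdups es)"
    by (subst set_eq_iff_mset_eq_distinct[symmetric]) auto
  hence eq: "prodm A (sorted_list_of_set (set es)) = prodm A (remdups es)"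
    by (rule prodm_perm[OF A])
  show ?thesis unfolding eq
    by (rule mat_eq_by_vec[of _ n n], insert z zero_mult_mat_vec A, auto)
qed

end



definition lag :: "real mat \<Rightarrow> real list \<Rightarrow> real \<Rightarrow> real mat" where
  "lag A ds mu = (1 / (\<Prod>x\<leftarrow>remove1 mu ds. mu - x)) \<cdot>\<^sub>m prodm A (remove1 mu ds)"

definition msum :: "nat \<Rightarrow> 'b set \<Rightarrow> ('b \<Rightarrow> real mat) \<Rightarrow> real mat" where
  "msum n S F = mat n n (\<lambda>(i,j). \<Sum>mu\<in>S. F mu $$ (i,j))"

lemma msum_carrier[simp]: "msum n S F \<in> carrier_mat n n"
  unfolding msum_def by simp

lemma mult_msum:
  assumes X: "X \<in> carrier_mat n n" and F: "\<And>mu. mu \<in> S \<Longrightarrow> F mu \<in> carrier_mat n n"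
  shows "X * msum n S F = msum n S (\<lambda>mu. X * F mu)"
proof (rule eq_matI)
  fix i j assume "i < dim_row (msum n S (\<lambda>mu. X * F mu))" "j < dim_col (msum n S (\<lambda>mu. X * F mu))"
  hence i: "i < n" and j: "j < n" unfolding msum_def by auto
  have "(X * msum n S F) $$ (i,j) = (\<Sum>k<n. X $$ (i,k) * (\<Sum>mu\<in>S. F mu $$ (k,j)))"
    using X i j by (simp add: msum_def scalar_prod_def lessThan_atLeast0)
  also have "\<dots> = (\<Sum>mu\<in>S. \<Sum>k<n. X $$ (i,k) * F mu $$ (k,j))"
    by (simp add: sum_distrib_left sum.swap[of _ S])
  also have "\<dots> = (\<Sum>mu\<in>S. (X * F mu) $$ (i,j))"
  proof (rule sum.cong[OF refl])
    fix mu assume "mu \<in> S"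
    hence "F mu \<in> carrier_mat n n" by (rule F)
    thus "(\<Sum>k<n. X $$ (i,k) * F mu $$ (k,j)) = (X * F mu) $$ (i,j)"
      using X i j by (simp add: scalar_prod_def lessThan_atLeast0)
  qed
  also have "\<dots> = msum n S (\<lambda>mu. X * F mu) $$ (i,j)" using i j by (simp add: msum_def)
  finally show "(X * msum n S F) $$ (i,j) = msum n S (\<lambda>mu. X * F mu) $$ (i,j)" .
qed (use X in \<open>auto simp: msum_def\<close>)

lemma msum_single:
  assumes "finite S" "nu \<in> S" "G \<in> carrier_mat n n"
  shows "msum n S (\<lambda>mu. if mu = nu then G else 0\<^sub>m n n) = G"
proof (rule eq_matI)
  fix i j assume "i < dim_row G" "j < dim_col G"
  hence i: "i < n" and j: "j < n" using assms by auto
  have "msum n S (\<lambda>mu. if mu = nu then G else 0\<^sub>m n n) $$ (i,j)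
      = (\<Sum>mu\<in>S. if mu = nu then G $$ (i,j) else 0)"
    using i j unfolding msum_def by (auto intro!: sum.cong)
  also have "\<dots> = G $$ (i,j)" using assms by simp
  finally show "msum n S (\<lambda>mu. if mu = nu then G else 0\<^sub>m n n) $$ (i,j) = G $$ (i,j)" .
qed (use assms in \<open>auto simp: msum_def\<close>)

lemma proj_unique:
  fixes P Q :: "real mat"
  assumes P: "P \<in> carrier_mat n n" and Q: "Q \<in> carrier_mat n n"
    and PP: "P * P = P" and QQ: "Q * Q = Q"
    and tP: "transpose_mat P = P" and tQ: "transpose_mat Q = Q"
    and im: "(\<lambda>v. P *\<^sub>v v) ` carrier_vec n = (\<lambda>v. Q *\<^sub>v v) ` carrier_vec n"
  shows "P = Q"
proof -
  have gen: "Y * X = X"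
    if X: "X \<in> carrier_mat n n" and Y: "Y \<in> carrier_mat n n" and YY: "Y * Y = Y"
      and im': "(\<lambda>v. X *\<^sub>v v) ` carrier_vec n = (\<lambda>v. Y *\<^sub>v v) ` carrier_vec n" for X Y :: "real mat"
  proof (rule mat_eq_by_vec[of _ n n])
    fix v :: "real vec" assume v: "v \<in> carrier_vec n"
    have "X *\<^sub>v v \<in> (\<lambda>v. Y *\<^sub>v v) ` carrier_vec n" using im' v by blast
    then obtain w where w: "w \<in> carrier_vec n" and xw: "X *\<^sub>v v = Y *\<^sub>v w" by blast
    have "(Y * X) *\<^sub>v v = Y *\<^sub>v (X *\<^sub>v v)" by (rule assoc_mult_mat_vec[OF Y X v])
    also have "\<dots> = (Y * Y) *\<^sub>v w" unfolding xw by (rule assoc_mult_mat_vec[symmetric, OF Y Y w])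
    also have "\<dots> = X *\<^sub>v v" using YY xw by simp
    finally show "(Y * X) *\<^sub>v v = X *\<^sub>v v" .
  qed (use X Y in auto)
  have QP: "Q * P = P" by (rule gen[OF P Q QQ im])
  have PQ: "P * Q = Q" by (rule gen[OF Q P PP im[symmetric]])
  have "P = transpose_mat (Q * P)" using QP tP by simp
  also have "\<dots> = transpose_mat P * transpose_mat Q" by (rule transpose_mult[OF Q P])
  also have "\<dots> = Q" using tP tQ PQ by simp
  finally show ?thesis .
qed

context
  fixes A :: "real mat" and n :: nat
  assumes A: "A \<in> carrier_mat n n"
begin

lemma zero_from_parts:
  assumes "distinct xs" and "w \<in> carrier_vec n" and "prodm A xs *\<^sub>v w = 0\<^sub>v n"
    and "\<And>nu. nu \<in> set xs \<Longrightarrow> prodm A (remove1 nu xs) *\<^sub>v w = 0\<^sub>v n"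
  shows "w = 0\<^sub>v n"
  using assms
proof (induction xs arbitrary: w)
  case Nil thus ?case using A by (simp add: dA[OF A])
next
  case (Cons mu rest)
  let ?u = "lin A mu *\<^sub>v w"
  have u: "?u \<in> carrier_vec n" by (rule mult_mat_vec_carrier[OF L[OF A] Cons.prems(2)])
  have swap: "prodm A ys *\<^sub>v ?u = prodm A (mu # ys) *\<^sub>v w" for ys
  proof -
    have "prodm A ys *\<^sub>v ?u = (prodm A ys * lin A mu) *\<^sub>v w"
      by (rule assoc_mult_mat_vec[symmetric, of _ n n _ n], insert Cons.prems(2) A, auto)
    also have "\<dots> = (lin A mu * prodm A ys) *\<^sub>v w" using lin_prodm_comm[OF A] by simp
    finally show ?thesis by simp
  qed
  have "?u = 0\<^sub>v n"
  proof (rule Cons.IH)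
    show "distinct rest" using Cons.prems by simp
    show "prodm A rest *\<^sub>v ?u = 0\<^sub>v n" unfolding swap using Cons.prems(3) .
    fix nu assume nu: "nu \<in> set rest"
    hence "nu \<noteq> mu" using Cons.prems(1) by auto
    hence "remove1 nu (mu # rest) = mu # remove1 nu rest" by simp
    thus "prodm A (remove1 nu rest) *\<^sub>v ?u = 0\<^sub>v n" unfolding swap
      using Cons.prems(4)[of nu] nu by simp
  qed (use u in auto)
  hence d: "A *\<^sub>v w - mu \<cdot>\<^sub>v w = 0\<^sub>v n" using lin_vec[OF A Cons.prems(2)] by simp
  have ev: "A *\<^sub>v w = mu \<cdot>\<^sub>v w"
    by (rule vec_minus_zero[where n=n, OF _ _ d], insert A Cons.prems(2), auto)
  have "prodm A rest *\<^sub>v w = 0\<^sub>v n" using Cons.prems(4)[of mu] by simp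
  hence "(\<Prod>x\<leftarrow>rest. mu - x) \<cdot>\<^sub>v w = 0\<^sub>v n" using prodm_eigen[OF A Cons.prems(2) ev] by simp
  moreover have "(\<Prod>x\<leftarrow>rest. mu - x) \<noteq> 0" using Cons.prems(1)
    by (auto simp: prod_list_zero_iff)
  ultimately show ?case by (rule smult_vec_zero[OF Cons.prems(2)])
qed

end



lemma smult_0v: "(a::real) \<cdot>\<^sub>v 0\<^sub>v n = 0\<^sub>v n" by (intro eq_vecI) auto
lemma zero_smult_v: "(v::real vec) \<in> carrier_vec n \<Longrightarrow> 0 \<cdot>\<^sub>v v = 0\<^sub>v n" by (intro eq_vecI) auto
lemma msum_cong: "(\<And>mu. mu \<in> S \<Longrightarrow> F mu = G mu) \<Longrightarrow> msum n S F = msum n S G"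
  unfolding msum_def by (intro cong_mat refl) (auto intro!: sum.cong)

context
  fixes A :: "real mat" and n :: nat and ds :: "real list"
  assumes A: "A \<in> carrier_mat n n" and symA: "transpose_mat A = A"
    and dist: "distinct ds" and ann: "prodm A ds = 0\<^sub>m n n"
begin

abbreviation cc where "cc mu \<equiv> (\<Prod>x\<leftarrow>remove1 mu ds. mu - x)"

lemma c_ne: "mu \<in> set ds \<Longrightarrow> cc mu \<noteq> 0"
  using dist by (auto simp: prod_list_zero_iff)

lemma lag_carrier[simp]: "lag A ds mu \<in> carrier_mat n n"
  unfolding lag_def using A by simp

lemma lag_prod_carrier[simp]: "lag A ds a * lag A ds b \<in> carrier_mat n n"
  by (rule mult_carrier_mat[OF lag_carrier lag_carrier])

lemma lag_vec: "v \<in> carrier_vec n \<Longrightarrow> lag A ds mu *\<^sub>v v = (1 / cc mu) \<cdot>\<^sub>v (prodm A (remove1 mu ds) *\<^sub>v v)"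
  unfolding lag_def by (rule smult_mat_vec[OF Pm[OF A]])

lemma lag_eig: assumes mu: "mu \<in> set ds" and v: "v \<in> carrier_vec n"
  shows "A *\<^sub>v (lag A ds mu *\<^sub>v v) = mu \<cdot>\<^sub>v (lag A ds mu *\<^sub>v v)"
proof -
  let ?u = "prodm A (remove1 mu ds) *\<^sub>v v"
  have u: "?u \<in> carrier_vec n" by (rule mult_mat_vec_carrier[OF Pm[OF A] v])
  have "lin A mu *\<^sub>v ?u = (lin A mu * prodm A (remove1 mu ds)) *\<^sub>v v"
    by (rule assoc_mult_mat_vec[symmetric, of _ n n _ n], insert v A, auto)
  also have "\<dots> = 0\<^sub>v n" unfolding prodm_remove1[OF A mu, symmetric] ann
    by (rule zero_mult_mat_vec[OF v])
  finally have z: "lin A mu *\<^sub>v ?u = 0\<^sub>v n" .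
  let ?w = "lag A ds mu *\<^sub>v v"
  have w: "?w \<in> carrier_vec n" by (rule mult_mat_vec_carrier[OF lag_carrier v])
  have "lin A mu *\<^sub>v ?w = (1 / cc mu) \<cdot>\<^sub>v (lin A mu *\<^sub>v ?u)"
    unfolding lag_vec[OF v] by (rule mult_mat_vec[OF L[OF A] u])
  hence "lin A mu *\<^sub>v ?w = 0\<^sub>v n" unfolding z smult_0v .
  hence d: "A *\<^sub>v ?w - mu \<cdot>\<^sub>v ?w = 0\<^sub>v n" using lin_vec[OF A w] by simp
  show ?thesis by (rule vec_minus_zero[where n=n, OF _ _ d], insert A w, auto)
qed

lemma lag_fix: assumes mu: "mu \<in> set ds" and v: "v \<in> carrier_vec n" and ev: "A *\<^sub>v v = mu \<cdot>\<^sub>v v"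
  shows "lag A ds mu *\<^sub>v v = v"
proof -
  have "lag A ds mu *\<^sub>v v = (1 / cc mu) \<cdot>\<^sub>v (cc mu \<cdot>\<^sub>v v)"
    unfolding lag_vec[OF v] prodm_eigen[OF A v ev] ..
  also have "\<dots> = v" using c_ne[OF mu] by (simp add: smult_smult_assoc)
  finally show ?thesis .
qed

lemma lag_other: assumes mu: "mu \<in> set ds" and nu: "nu \<noteq> mu"
  and v: "v \<in> carrier_vec n" and ev: "A *\<^sub>v v = mu \<cdot>\<^sub>v v"
  shows "lag A ds nu *\<^sub>v v = 0\<^sub>v n"
proof -
  have "mu \<in> set (remove1 nu ds)" using mu nu by (simp add: in_set_remove1)
  hence p0: "(\<Prod>x\<leftarrow>remove1 nu ds. mu - x) = 0" by (auto simp: prod_list_zero_iff)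
  have "prodm A (remove1 nu ds) *\<^sub>v v = 0\<^sub>v n"
    unfolding prodm_eigen[OF A v ev] p0 by (rule zero_smult_v[OF v])
  thus ?thesis unfolding lag_vec[OF v] by (simp add: smult_0v)
qed

lemma lag_sym: "transpose_mat (lag A ds mu) = lag A ds mu"
  unfolding lag_def transpose_smult_mat transpose_prodm[OF A symA] ..

lemma lag_eig_vec: assumes mu: "mu \<in> set ds" and v: "v \<in> carrier_vec n"
  shows "lag A ds mu *\<^sub>v v \<in> carrier_vec n"
  by (rule mult_mat_vec_carrier[OF lag_carrier v])

lemma lag_idem: assumes mu: "mu \<in> set ds" shows "lag A ds mu * lag A ds mu = lag A ds mu"
proof (rule mat_eq_by_vec[of _ n n])
  fix v :: "real vec" assume v: "v \<in> carrier_vec n"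
  have "(lag A ds mu * lag A ds mu) *\<^sub>v v = lag A ds mu *\<^sub>v (lag A ds mu *\<^sub>v v)"
    by (rule assoc_mult_mat_vec[OF lag_carrier lag_carrier v])
  also have "\<dots> = lag A ds mu *\<^sub>v v"
    by (rule lag_fix[OF mu lag_eig_vec[OF mu v] lag_eig[OF mu v]])
  finally show "(lag A ds mu * lag A ds mu) *\<^sub>v v = lag A ds mu *\<^sub>v v" .
qed auto

lemma lag_orth: assumes mu: "mu \<in> set ds" and nu: "nu \<noteq> mu"
  shows "lag A ds nu * lag A ds mu = 0\<^sub>m n n"
proof (rule mat_eq_by_vec[of _ n n])
  fix v :: "real vec" assume v: "v \<in> carrier_vec n"
  have "(lag A ds nu * lag A ds mu) *\<^sub>v v = lag A ds nu *\<^sub>v (lag A ds mu *\<^sub>v v)"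
    by (rule assoc_mult_mat_vec[OF lag_carrier lag_carrier v])
  also have "\<dots> = 0\<^sub>v n"
    by (rule lag_other[OF mu nu lag_eig_vec[OF mu v] lag_eig[OF mu v]])
  finally show "(lag A ds nu * lag A ds mu) *\<^sub>v v = 0\<^sub>m n n *\<^sub>v v" using zero_mult_mat_vec[OF v] by simp
qed auto

lemma A_lag: assumes mu: "mu \<in> set ds" shows "A * lag A ds mu = mu \<cdot>\<^sub>m lag A ds mu"
proof (rule mat_eq_by_vec[of _ n n])
  fix v :: "real vec" assume v: "v \<in> carrier_vec n"
  have "(A * lag A ds mu) *\<^sub>v v = A *\<^sub>v (lag A ds mu *\<^sub>v v)"
    by (rule assoc_mult_mat_vec[OF A lag_carrier v])
  also have "\<dots> = mu \<cdot>\<^sub>v (lag A ds mu *\<^sub>v v)" by (rule lag_eig[OF mu v])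
  also have "\<dots> = (mu \<cdot>\<^sub>m lag A ds mu) *\<^sub>v v" by (rule smult_mat_vec[symmetric, OF lag_carrier v])
  finally show "(A * lag A ds mu) *\<^sub>v v = (mu \<cdot>\<^sub>m lag A ds mu) *\<^sub>v v" .
qed (use A in auto)

lemma lag_image: assumes mu: "mu \<in> set ds"
  shows "(\<lambda>v. lag A ds mu *\<^sub>v v) ` carrier_vec n = eigenspace A mu"
proof
  show "(\<lambda>v. lag A ds mu *\<^sub>v v) ` carrier_vec n \<subseteq> eigenspace A mu"
    unfolding eigenspace_def dA[OF A] using lag_eig[OF mu] lag_eig_vec[OF mu] by auto
  show "eigenspace A mu \<subseteq> (\<lambda>v. lag A ds mu *\<^sub>v v) ` carrier_vec n"
  proof
    fix v assume "v \<in> eigenspace A mu"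
    hence v: "v \<in> carrier_vec n" and ev: "A *\<^sub>v v = mu \<cdot>\<^sub>v v" unfolding eigenspace_def dA[OF A] by auto
    have "v = lag A ds mu *\<^sub>v v" using lag_fix[OF mu v ev] by simp
    thus "v \<in> (\<lambda>v. lag A ds mu *\<^sub>v v) ` carrier_vec n" using v by blast
  qed
qed

lemma eig_proj_lag: assumes mu: "mu \<in> set ds" shows "eig_proj A mu = lag A ds mu"
  unfolding eig_proj_def dA[OF A]
proof (rule the_equality)
  show "lag A ds mu \<in> carrier_mat n n \<and> lag A ds mu * lag A ds mu = lag A ds mu \<and>
    transpose_mat (lag A ds mu) = lag A ds mu \<and>
    (\<lambda>v. lag A ds mu *\<^sub>v v) ` carrier_vec n = eigenspace A mu"
    using lag_idem[OF mu] lag_sym lag_image[OF mu] by simp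
  fix P assume P: "P \<in> carrier_mat n n \<and> P * P = P \<and> transpose_mat P = P \<and>
    (\<lambda>v. P *\<^sub>v v) ` carrier_vec n = eigenspace A mu"
  show "P = lag A ds mu"
    by (rule proj_unique[of _ n], insert P lag_idem[OF mu] lag_sym lag_image[OF mu], auto)
qed

lemma lag_sum: "msum n (set ds) (lag A ds) = 1\<^sub>m n"
proof (rule mat_eq_by_vec[of _ n n])
  fix v :: "real vec" assume v: "v \<in> carrier_vec n"
  let ?S = "msum n (set ds) (lag A ds)"
  let ?w = "v - ?S *\<^sub>v v"
  have Sv: "?S *\<^sub>v v \<in> carrier_vec n" by (rule mult_mat_vec_carrier[OF msum_carrier v])
  have w: "?w \<in> carrier_vec n" using v Sv by simp
  have part: "prodm A (remove1 nu ds) *\<^sub>v ?w = 0\<^sub>v n" if nu: "nu \<in> set ds" for nu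
  proof -
    have "lag A ds nu * ?S = msum n (set ds) (\<lambda>mu. lag A ds nu * lag A ds mu)"
      by (rule mult_msum, auto)
    also have "\<dots> = msum n (set ds) (\<lambda>mu. if mu = nu then lag A ds nu else 0\<^sub>m n n)"
    proof (rule msum_cong)
      fix mu assume mu: "mu \<in> set ds"
      show "lag A ds nu * lag A ds mu = (if mu = nu then lag A ds nu else 0\<^sub>m n n)"
        using lag_idem[OF nu] lag_orth[OF mu, of nu] by (cases "mu = nu") auto
    qed
    also have "\<dots> = lag A ds nu" by (rule msum_single, insert nu, auto)
    finally have LS: "lag A ds nu * ?S = lag A ds nu" .
    have "lag A ds nu *\<^sub>v ?w = lag A ds nu *\<^sub>v v - lag A ds nu *\<^sub>v (?S *\<^sub>v v)"
      by (rule mult_minus_distrib_mat_vec[OF lag_carrier v Sv])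
    also have "lag A ds nu *\<^sub>v (?S *\<^sub>v v) = (lag A ds nu * ?S) *\<^sub>v v"
      by (rule assoc_mult_mat_vec[symmetric, OF lag_carrier msum_carrier v])
    finally have "lag A ds nu *\<^sub>v ?w = 0\<^sub>v n" unfolding LS
      using mult_mat_vec_carrier[OF lag_carrier v] by simp
    hence "(1 / cc nu) \<cdot>\<^sub>v (prodm A (remove1 nu ds) *\<^sub>v ?w) = 0\<^sub>v n" unfolding lag_vec[OF w] .
    thus ?thesis by (rule smult_vec_zero[OF mult_mat_vec_carrier[OF Pm[OF A] w]], insert c_ne[OF nu], simp)
  qed
  have "prodm A ds *\<^sub>v ?w = 0\<^sub>v n" unfolding ann by (rule zero_mult_mat_vec[OF w])
  from zero_from_parts[OF A dist w this part] have "?w = 0\<^sub>v n" .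
  hence "v = ?S *\<^sub>v v" by (rule vec_minus_zero[where n=n, OF v Sv])
  thus "?S *\<^sub>v v = 1\<^sub>m n *\<^sub>v v" using v by simp
qed auto

end



lemma det_rank1:
  fixes x :: "real vec"
  assumes x: "x \<in> carrier_vec n"
  shows "det (1\<^sub>m n - mat n n (\<lambda>(i,j). x $ i)) = 1 - (\<Sum>i<n. x $ i)"
proof -
  define X where "X = mat n 1 (\<lambda>(i,j). x $ i)"
  define Y where "Y = (mat 1 n (\<lambda>_. 1) :: real mat)"
  have Xc: "X \<in> carrier_mat n 1" and Yc: "Y \<in> carrier_mat 1 n" unfolding X_def Y_def by auto
  have XY: "X * Y = mat n n (\<lambda>(i,j). x $ i)"
    unfolding X_def Y_def by (intro eq_matI) (auto simp: scalar_prod_def)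
  have YX: "Y * X = mat 1 1 (\<lambda>_. \<Sum>i<n. x $ i)"
    unfolding X_def Y_def by (intro eq_matI) (auto simp: scalar_prod_def lessThan_atLeast0)
  define C where "C = 1\<^sub>m n - X * Y"
  have Cc: "C \<in> carrier_mat n n" unfolding C_def using Xc Yc by auto
  define K where "K = four_block_mat (1\<^sub>m n) X Y (1\<^sub>m 1)"
  have "four_block_mat (1\<^sub>m n) X (0\<^sub>m 1 n) (1\<^sub>m 1) * four_block_mat C (0\<^sub>m n 1) Y (1\<^sub>m 1)
    = four_block_mat (1\<^sub>m n * C + X * Y) (1\<^sub>m n * 0\<^sub>m n 1 + X * 1\<^sub>m 1)
        (0\<^sub>m 1 n * C + 1\<^sub>m 1 * Y) (0\<^sub>m 1 n * 0\<^sub>m n 1 + 1\<^sub>m 1 * 1\<^sub>m 1)"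
    by (rule mult_four_block_mat, insert Xc Yc Cc, auto)
  also have "\<dots> = K" unfolding K_def
  proof -
    have "1\<^sub>m n * C + X * Y = 1\<^sub>m n" unfolding C_def using Xc Yc by (intro eq_matI) auto
    moreover have "1\<^sub>m n * 0\<^sub>m n 1 + X * 1\<^sub>m 1 = X" using Xc by simp
    moreover have "0\<^sub>m 1 n * C + 1\<^sub>m 1 * Y = Y" using Yc Cc by simp
    moreover have "0\<^sub>m 1 n * 0\<^sub>m n 1 + 1\<^sub>m 1 * 1\<^sub>m 1 = (1\<^sub>m 1 :: real mat)" by simp
    ultimately show "four_block_mat (1\<^sub>m n * C + X * Y) (1\<^sub>m n * 0\<^sub>m n 1 + X * 1\<^sub>m 1)
        (0\<^sub>m 1 n * C + 1\<^sub>m 1 * Y) (0\<^sub>m 1 n * 0\<^sub>m n 1 + 1\<^sub>m 1 * 1\<^sub>m 1) = four_block_mat (1\<^sub>m n) X Y (1\<^sub>m 1)"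
      by simp
  qed
  finally have K1: "four_block_mat (1\<^sub>m n) X (0\<^sub>m 1 n) (1\<^sub>m 1) * four_block_mat C (0\<^sub>m n 1) Y (1\<^sub>m 1) = K" .
  have "det K = det (four_block_mat (1\<^sub>m n) X (0\<^sub>m 1 n) (1\<^sub>m 1)) * det (four_block_mat C (0\<^sub>m n 1) Y (1\<^sub>m 1))"
    unfolding K1[symmetric] by (rule det_mult[of _ "n+1"], insert Xc Yc Cc, auto)
  also have "det (four_block_mat (1\<^sub>m n) X (0\<^sub>m 1 n) (1\<^sub>m 1)) = 1"
    by (subst det_four_block_mat_lower_left_zero[OF _ Xc], auto)
  also have "det (four_block_mat C (0\<^sub>m n 1) Y (1\<^sub>m 1)) = det C"
    by (subst det_four_block_mat_upper_right_zero[OF Cc _ Yc], auto)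
  finally have dK1: "det K = det C" by simp
  define D where "D = 1\<^sub>m 1 - Y * X"
  have Dc: "D \<in> carrier_mat 1 1" unfolding D_def using Xc Yc by auto
  have "four_block_mat (1\<^sub>m n) (0\<^sub>m n 1) Y (1\<^sub>m 1) * four_block_mat (1\<^sub>m n) X (0\<^sub>m 1 n) D
    = four_block_mat (1\<^sub>m n * 1\<^sub>m n + 0\<^sub>m n 1 * 0\<^sub>m 1 n) (1\<^sub>m n * X + 0\<^sub>m n 1 * D)
        (Y * 1\<^sub>m n + 1\<^sub>m 1 * 0\<^sub>m 1 n) (Y * X + 1\<^sub>m 1 * D)"
    by (rule mult_four_block_mat, insert Xc Yc Dc, auto)
  also have "\<dots> = K" unfolding K_def
  proof -
    have "1\<^sub>m n * 1\<^sub>m n + 0\<^sub>m n 1 * 0\<^sub>m 1 n = (1\<^sub>m n :: real mat)" by simp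
    moreover have "1\<^sub>m n * X + 0\<^sub>m n 1 * D = X" using Xc Dc by simp
    moreover have "Y * 1\<^sub>m n + 1\<^sub>m 1 * 0\<^sub>m 1 n = Y" using Yc by simp
    moreover have "Y * X + 1\<^sub>m 1 * D = 1\<^sub>m 1" unfolding D_def using Xc Yc by (intro eq_matI) auto
    ultimately show "four_block_mat (1\<^sub>m n * 1\<^sub>m n + 0\<^sub>m n 1 * 0\<^sub>m 1 n) (1\<^sub>m n * X + 0\<^sub>m n 1 * D)
        (Y * 1\<^sub>m n + 1\<^sub>m 1 * 0\<^sub>m 1 n) (Y * X + 1\<^sub>m 1 * D) = four_block_mat (1\<^sub>m n) X Y (1\<^sub>m 1)"
      by simp
  qed
  finally have K2: "four_block_mat (1\<^sub>m n) (0\<^sub>m n 1) Y (1\<^sub>m 1) * four_block_mat (1\<^sub>m n) X (0\<^sub>m 1 n) D = K" .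
  have "det K = det (four_block_mat (1\<^sub>m n) (0\<^sub>m n 1) Y (1\<^sub>m 1)) * det (four_block_mat (1\<^sub>m n) X (0\<^sub>m 1 n) D)"
    unfolding K2[symmetric] by (rule det_mult[of _ "n+1"], insert Xc Yc Dc, auto)
  also have "det (four_block_mat (1\<^sub>m n) (0\<^sub>m n 1) Y (1\<^sub>m 1)) = 1"
    by (subst det_four_block_mat_upper_right_zero[OF _ _ Yc], auto)
  also have "det (four_block_mat (1\<^sub>m n) X (0\<^sub>m 1 n) D) = det D"
    by (subst det_four_block_mat_lower_left_zero[OF _ Xc _ Dc], auto)
  also have "D = mat 1 1 (\<lambda>_. 1 - (\<Sum>i<n. x $ i))" unfolding D_def YX by (intro eq_matI) auto
  also have "det (mat 1 1 (\<lambda>_. 1 - (\<Sum>i<n. x $ i))) = 1 - (\<Sum>i<n. x $ i)"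
    by (subst det_upper_triangular[of _ 1], auto simp: upper_triangular_def diag_mat_def)
  finally have dK2: "det K = 1 - (\<Sum>i<n. x $ i)" by simp
  show ?thesis using dK1 dK2 unfolding C_def XY by simp
qed



context
  fixes A :: "real mat" and n :: nat and ds :: "real list"
  assumes A: "A \<in> carrier_mat n n" and symA: "transpose_mat A = A"
    and dist: "distinct ds" and ann: "prodm A ds = 0\<^sub>m n n"
begin

lemma M_lag: assumes mu: "mu \<in> set ds"
  shows "mat n n (\<lambda>(i,j). (if i = j then s else 0) + A $$ (i,j)) * lag A ds mu = (s + mu) \<cdot>\<^sub>m lag A ds mu"
proof (rule eq_matI)
  let ?M = "mat n n (\<lambda>(i,j). (if i = j then s else 0) + A $$ (i,j))"
  let ?L = "lag A ds mu"
  have Lc: "?L \<in> carrier_mat n n" by (rule lag_carrier[OF A symA dist ann])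
  fix i j assume "i < dim_row ((s + mu) \<cdot>\<^sub>m ?L)" "j < dim_col ((s + mu) \<cdot>\<^sub>m ?L)"
  hence i: "i < n" and j: "j < n" using Lc by auto
  have AL: "(A * ?L) $$ (i,j) = mu * ?L $$ (i,j)"
    using arg_cong[OF A_lag[OF A symA dist ann mu], of "\<lambda>X. X $$ (i,j)"] i j Lc by simp
  have "(?M * ?L) $$ (i,j) = (\<Sum>k\<in>{0..<n}. ((if i = k then s else 0) + A $$ (i,k)) * ?L $$ (k,j))"
    using i j Lc by (simp add: scalar_prod_def)
  also have "\<dots> = (\<Sum>k\<in>{0..<n}. (if i = k then s * ?L $$ (k,j) else 0)) + (\<Sum>k\<in>{0..<n}. A $$ (i,k) * ?L $$ (k,j))"
    by (subst sum.distrib[symmetric], rule sum.cong, auto simp: algebra_simps)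
  also have "(\<Sum>k\<in>{0..<n}. (if i = k then s * ?L $$ (k,j) else 0)) = s * ?L $$ (i,j)"
    using i by simp
  also have "(\<Sum>k\<in>{0..<n}. A $$ (i,k) * ?L $$ (k,j)) = (A * ?L) $$ (i,j)"
    using i j Lc A by (simp add: scalar_prod_def)
  finally show "(?M * ?L) $$ (i,j) = ((s + mu) \<cdot>\<^sub>m ?L) $$ (i,j)"
    using AL i j Lc by (simp add: algebra_simps)
qed (use lag_carrier[OF A symA dist ann, of mu] in auto)

lemma det_formula:
  assumes s: "\<And>mu. mu \<in> set ds \<Longrightarrow> s + mu \<noteq> 0"
  shows "det (mat n n (\<lambda>(i,j). (if i = j then s else 0) + A $$ (i,j) - 1)) =
    det (mat n n (\<lambda>(i,j). (if i = j then s else 0) + A $$ (i,j))) *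
    (1 - (\<Sum>mu\<in>set ds. (1 / (s + mu)) * (\<Sum>i<n. \<Sum>j<n. lag A ds mu $$ (i,j))))"
proof -
  let ?M = "mat n n (\<lambda>(i,j). (if i = j then s else 0) + A $$ (i,j))"
  define J where "J = (mat n n (\<lambda>_. 1) :: real mat)"
  define Minv where "Minv = msum n (set ds) (\<lambda>mu. (1 / (s + mu)) \<cdot>\<^sub>m lag A ds mu)"
  have Mc: "?M \<in> carrier_mat n n" by simp
  have Jc: "J \<in> carrier_mat n n" unfolding J_def by simp
  have Ic: "Minv \<in> carrier_mat n n" unfolding Minv_def by simp
  note Lc = lag_carrier[OF A symA dist ann]
  have MI: "?M * Minv = 1\<^sub>m n"
  proof -
    have "?M * Minv = msum n (set ds) (\<lambda>mu. ?M * ((1 / (s + mu)) \<cdot>\<^sub>m lag A ds mu))"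
      unfolding Minv_def by (rule mult_msum[OF Mc], use Lc in auto)
    also have "\<dots> = msum n (set ds) (lag A ds)"
    proof (rule msum_cong)
      fix mu assume mu: "mu \<in> set ds"
      have "?M * ((1 / (s + mu)) \<cdot>\<^sub>m lag A ds mu) = (1 / (s + mu)) \<cdot>\<^sub>m (?M * lag A ds mu)"
        by (rule mult_smult_distrib[OF Mc Lc])
      also have "\<dots> = lag A ds mu" unfolding M_lag[OF mu] using s[OF mu] Lc[of mu]
        by (intro eq_matI) auto
      finally show "?M * ((1 / (s + mu)) \<cdot>\<^sub>m lag A ds mu) = lag A ds mu" .
    qed
    also have "\<dots> = 1\<^sub>m n" by (rule lag_sum[OF A symA dist ann])
    finally show ?thesis .
  qed
  have MJ: "mat n n (\<lambda>(i,j). (if i = j then s else 0) + A $$ (i,j) - 1) = ?M * (1\<^sub>m n - Minv * J)"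
  proof -
    have "?M * (1\<^sub>m n - Minv * J) = ?M * 1\<^sub>m n - ?M * (Minv * J)"
      by (rule mult_minus_distrib_mat[OF Mc], use Ic Jc in auto)
    also have "?M * (Minv * J) = (?M * Minv) * J" by (rule assoc_mult_mat[symmetric, OF Mc Ic Jc])
    also have "\<dots> = J" unfolding MI using Jc by simp
    finally show ?thesis unfolding J_def by (intro eq_matI) auto
  qed
  define x where "x = vec n (\<lambda>i. \<Sum>k<n. Minv $$ (i,k))"
  have xc: "x \<in> carrier_vec n" unfolding x_def by simp
  have IJ: "Minv * J = mat n n (\<lambda>(i,j). x $ i)"
    unfolding J_def x_def using Ic by (intro eq_matI) (auto simp: scalar_prod_def lessThan_atLeast0)
  have "det (mat n n (\<lambda>(i,j). (if i = j then s else 0) + A $$ (i,j) - 1)) = det ?M * det (1\<^sub>m n - Minv * J)"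
    unfolding MJ by (rule det_mult[OF Mc], use Ic Jc in auto)
  also have "det (1\<^sub>m n - Minv * J) = 1 - (\<Sum>i<n. x $ i)" unfolding IJ by (rule det_rank1[OF xc])
  also have "(\<Sum>i<n. x $ i) = (\<Sum>mu\<in>set ds. (1 / (s + mu)) * (\<Sum>i<n. \<Sum>j<n. lag A ds mu $$ (i,j)))"
  proof -
    have "(\<Sum>i<n. x $ i) = (\<Sum>i<n. \<Sum>k<n. \<Sum>mu\<in>set ds. (1 / (s + mu)) * lag A ds mu $$ (i,k))"
    proof -
      have dL: "dim_row (lag A ds mu) = n" "dim_col (lag A ds mu) = n" for mu using Lc[of mu] by auto
      show ?thesis unfolding x_def Minv_def msum_def by (auto simp: dL intro!: sum.cong)
    qed
    also have "\<dots> = (\<Sum>i<n. \<Sum>mu\<in>set ds. \<Sum>k<n. (1 / (s + mu)) * lag A ds mu $$ (i,k))"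
      by (rule sum.cong[OF refl], rule sum.swap)
    also have "\<dots> = (\<Sum>mu\<in>set ds. \<Sum>i<n. \<Sum>k<n. (1 / (s + mu)) * lag A ds mu $$ (i,k))"
      by (rule sum.swap)
    also have "\<dots> = (\<Sum>mu\<in>set ds. (1 / (s + mu)) * (\<Sum>i<n. \<Sum>k<n. lag A ds mu $$ (i,k)))"
      by (simp add: sum_distrib_left)
    finally show ?thesis .
  qed
  finally show ?thesis .
qed

end



lemma sum_mset_upt: "sum_mset (image_mset f (mset [0..<n])) = (\<Sum>x<n. f x)"
proof -
  have "sum_mset (image_mset f (mset [0..<n])) = sum_list (map f [0..<n])"
    unfolding mset_map[symmetric] sum_mset_sum_list ..
  also have "\<dots> = (\<Sum>x<n. f x)" by (simp add: interv_sum_list_conv_sum_set_nat lessThan_atLeast0)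
  finally show ?thesis .
qed

lemma mset_singletons: "sum_list (map (\<lambda>e. {#e#}) es) = mset es"
  by (induction es) auto

lemma poly_eq_cofinite:
  fixes p q :: "real poly"
  assumes S: "finite S" and eq: "\<And>t. t \<notin> S \<Longrightarrow> poly p t = poly q t"
  shows "p = q"
proof (rule ccontr)
  assume "p \<noteq> q"
  hence "p - q \<noteq> 0" by simp
  hence R: "finite {x. poly (p - q) x = 0}" by (rule poly_roots_finite)
  have "UNIV \<subseteq> S \<union> {x. poly (p - q) x = 0}" using eq by auto
  hence "finite (UNIV :: real set)" using S R by (meson finite_UnI finite_subset)
  thus False using infinite_UNIV_char_0 by blast
qed

context
  fixes n :: nat and E :: "nat \<Rightarrow> nat \<Rightarrow> bool"
  assumes G: "simple_graph n E"
begin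

lemma Ac: "adj_mat n E \<in> carrier_mat n n" unfolding adj_mat_def by simp

lemma Asym_ij: "i < n \<Longrightarrow> j < n \<Longrightarrow> adj_mat n E $$ (i,j) = adj_mat n E $$ (j,i)"
  using G unfolding simple_graph_def adj_mat_def by auto

lemma Asym: "transpose_mat (adj_mat n E) = adj_mat n E"
proof (rule eq_matI)
  fix i j assume "i < dim_row (adj_mat n E)" "j < dim_col (adj_mat n E)"
  hence i: "i < n" and j: "j < n" unfolding adj_mat_def by auto
  show "transpose_mat (adj_mat n E) $$ (i, j) = adj_mat n E $$ (i, j)"
    using Asym_ij[OF j i] i j Ac by simp
qed (auto simp: adj_mat_def)

lemma graph_split: "\<exists>es. char_poly (adj_mat n E) = (\<Prod>e\<leftarrow>es. [:-e,1:]) \<and> Spec n E = mset es"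
proof -
  obtain es where es: "char_poly (adj_mat n E) = (\<Prod>e\<leftarrow>es. [:-e,1:])"
    using real_sym_split[OF Ac Asym_ij] by blast
  have "Spec n E = proots (\<Prod>p\<leftarrow>map (\<lambda>e. [:-e,1:]) es. p)" unfolding Spec_def es by simp
  also have "\<dots> = sum_list (map proots (map (\<lambda>e. [:-e,1:]) es))"
    by (rule proots_prod_list) auto
  also have "\<dots> = sum_list (map (\<lambda>e. {#e#}) es)"
    by (simp add: comp_def proots_linear_factor[of "- _", simplified])
  also have "\<dots> = mset es" by (rule mset_singletons)
  finally show ?thesis using es by blast
qed

lemma spec_charpoly: "char_poly (adj_mat n E) = prod_mset (image_mset (\<lambda>e. [:-e,1:]) (Spec n E))"
proof -
  obtain es where es: "char_poly (adj_mat n E) = (\<Prod>e\<leftarrow>es. [:-e,1:])" and sp: "Spec n E = mset es"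
    using graph_split by blast
  show ?thesis unfolding es sp mset_map[symmetric] prod_mset_prod_list ..
qed

lemma ds_props: "distinct (distinct_eigs n E) \<and> prodm (adj_mat n E) (distinct_eigs n E) = 0\<^sub>m n n"
proof -
  obtain es where es: "char_poly (adj_mat n E) = (\<Prod>e\<leftarrow>es. [:-e,1:])" and sp: "Spec n E = mset es"
    using graph_split by blast
  have ds: "distinct_eigs n E = sorted_list_of_set (set es)" unfolding distinct_eigs_def sp by simp
  show ?thesis unfolding ds using annihil_distinct[OF Ac Asym es] by simp
qed

lemma compl_formula:
  assumes t: "\<forall>mu\<in>set (distinct_eigs n E). t + 1 + mu \<noteq> 0"
  shows "poly (char_poly (adj_mat n (compl_graph E))) t =
    (-1)^n * poly (char_poly (adj_mat n E)) (-(t+1)) *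
    (1 - (\<Sum>mu\<in>set (distinct_eigs n E). 1 / (t + 1 + mu) * (\<Sum>i<n. \<Sum>j<n. eig_proj (adj_mat n E) mu $$ (i,j))))"
proof -
  let ?A = "adj_mat n E" and ?B = "adj_mat n (compl_graph E)" and ?ds = "distinct_eigs n E"
  have dist: "distinct ?ds" and ann: "prodm ?A ?ds = 0\<^sub>m n n" using ds_props by auto
  have Bc: "?B \<in> carrier_mat n n" unfolding adj_mat_def by simp
  have irr: "\<And>i. i < n \<Longrightarrow> \<not> E i i" using G unfolding simple_graph_def by auto
  have "poly (char_poly ?B) t = det (- char_matrix ?B t)" by (rule char_poly_matrix[OF Bc])
  also have "- char_matrix ?B t = mat n n (\<lambda>(i,j). (if i = j then t + 1 else 0) + ?A $$ (i,j) - 1)"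
    by (rule eq_matI) (auto simp: char_matrix_def adj_mat_def compl_graph_def irr)
  also have "det \<dots> = det (mat n n (\<lambda>(i,j). (if i = j then t + 1 else 0) + ?A $$ (i,j))) *
    (1 - (\<Sum>mu\<in>set ?ds. (1 / (t + 1 + mu)) * (\<Sum>i<n. \<Sum>j<n. lag ?A ?ds mu $$ (i,j))))"
    by (rule det_formula[OF Ac Asym dist ann], use t in auto)
  also have "(\<Sum>mu\<in>set ?ds. (1 / (t + 1 + mu)) * (\<Sum>i<n. \<Sum>j<n. lag ?A ?ds mu $$ (i,j)))
     = (\<Sum>mu\<in>set ?ds. 1 / (t + 1 + mu) * (\<Sum>i<n. \<Sum>j<n. eig_proj ?A mu $$ (i,j)))"
    by (rule sum.cong[OF refl], simp add: eig_proj_lag[OF Ac Asym dist ann])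
  also have "det (mat n n (\<lambda>(i,j). (if i = j then t + 1 else 0) + ?A $$ (i,j))) =
      (-1)^n * poly (char_poly ?A) (-(t+1))"
  proof -
    let ?M = "mat n n (\<lambda>(i,j). (if i = j then t + 1 else 0) + ?A $$ (i,j))"
    have "poly (char_poly ?A) (-(t+1)) = det (- char_matrix ?A (-(t+1)))" by (rule char_poly_matrix[OF Ac])
    also have "- char_matrix ?A (-(t+1)) = (-1) \<cdot>\<^sub>m ?M"
      by (rule eq_matI) (auto simp: char_matrix_def adj_mat_def)
    also have "det \<dots> = (-1)^n * det ?M" by simp
    finally have "poly (char_poly ?A) (-(t+1)) = (-1)^n * det ?M" .
    hence "(-1)^n * poly (char_poly ?A) (-(t+1)) = ((-1)^n * (-1)^n) * det ?M" by simp
    also have "(-1::real)^n * (-1)^n = 1" by (simp flip: power_mult_distrib)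
    finally show ?thesis by simp
  qed
  finally show ?thesis .
qed

end



lemma Phi_eq:
  assumes k: "k < length (distinct_eigs n E)"
  shows "sum_mset (image_mset (\<lambda>(a,N). sum_mset (image_mset (\<lambda>l. l ! k) N)) (snd (F_weak n E)))
    = (\<Sum>x<n. \<Sum>y<n. eig_proj (adj_mat n E) (distinct_eigs n E ! k) $$ (x,y))"
proof -
  have "sum_mset (image_mset (\<lambda>(a,N). sum_mset (image_mset (\<lambda>l. l ! k) N)) (snd (F_weak n E)))
    = sum_mset (image_mset (\<lambda>x. sum_mset (image_mset (\<lambda>y. Pstar n E x y ! k) (mset [0..<n]))) (mset [0..<n]))"
    unfolding F_weak_def by (simp add: image_mset.compositionality comp_def)
  also have "\<dots> = (\<Sum>x<n. \<Sum>y<n. Pstar n E x y ! k)" unfolding sum_mset_upt ..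
  also have "\<dots> = (\<Sum>x<n. \<Sum>y<n. eig_proj (adj_mat n E) (distinct_eigs n E ! k) $$ (x,y))"
    unfolding Pstar_def using k by simp
  finally show ?thesis .
qed

lemma main_n:
  assumes G: "simple_graph n E" and H: "simple_graph n F" and FW: "F_weak n E = F_weak n F"
  shows "Spec n (compl_graph E) = Spec n (compl_graph F)"
proof -
  have S: "Spec n E = Spec n F" using FW unfolding F_weak_def by simp
  have ds: "distinct_eigs n E = distinct_eigs n F" unfolding distinct_eigs_def S ..
  have cp: "char_poly (adj_mat n E) = char_poly (adj_mat n F)"
    unfolding spec_charpoly[OF G] spec_charpoly[OF H] S ..
  have cs: "(\<Sum>i<n. \<Sum>j<n. eig_proj (adj_mat n E) mu $$ (i,j)) = (\<Sum>i<n. \<Sum>j<n. eig_proj (adj_mat n F) mu $$ (i,j))"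
    if mu: "mu \<in> set (distinct_eigs n E)" for mu
  proof -
    obtain k where k: "k < length (distinct_eigs n E)" and mk: "distinct_eigs n E ! k = mu"
      using mu by (metis in_set_conv_nth)
    have kF: "k < length (distinct_eigs n F)" using k ds by simp
    have mkF: "distinct_eigs n F ! k = mu" using mk ds by simp
    show ?thesis using Phi_eq[OF k] Phi_eq[OF kF] FW mk mkF by simp
  qed
  have "char_poly (adj_mat n (compl_graph E)) = char_poly (adj_mat n (compl_graph F))"
  proof (rule poly_eq_cofinite)
    show "finite ((\<lambda>mu. -1 - mu) ` set (distinct_eigs n E))" by simp
    fix t assume t: "t \<notin> (\<lambda>mu. -1 - mu) ` set (distinct_eigs n E)"
    have tE: "\<forall>mu\<in>set (distinct_eigs n E). t + 1 + mu \<noteq> 0"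
    proof
      fix mu assume "mu \<in> set (distinct_eigs n E)"
      moreover have "t + 1 + mu = 0 \<Longrightarrow> t = -1 - mu" by simp
      ultimately show "t + 1 + mu \<noteq> 0" using t by blast
    qed
    hence tF: "\<forall>mu\<in>set (distinct_eigs n F). t + 1 + mu \<noteq> 0" using ds by simp
    show "poly (char_poly (adj_mat n (compl_graph E))) t = poly (char_poly (adj_mat n (compl_graph F))) t"
      unfolding compl_formula[OF G tE] compl_formula[OF H tF] cp ds[symmetric]
      using cs by (simp cong: sum.cong)
  qed
  thus ?thesis unfolding Spec_def by simp
qed

theorem theorem5p4:
  fixes n m :: nat and E F :: "nat \<Rightarrow> nat \<Rightarrow> bool"
  assumes "simple_graph n E" and "simple_graph m F"
    and "F_weak n E = F_weak m F"
  shows "Spec n E = Spec m F \<and> Spec n (compl_graph E) = Spec m (compl_graph F)"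
proof -
  have "size (snd (F_weak n E)) = size (snd (F_weak m F))" using assms(3) by simp
  hence nm: "n = m" unfolding F_weak_def by simp
  have S: "Spec n E = Spec m F" using assms(3) unfolding F_weak_def by simp
  have "Spec n (compl_graph E) = Spec n (compl_graph F)"
    by (rule main_n[OF assms(1)], insert assms(2,3) nm, auto)
  thus ?thesis using S nm by simp
qed

end
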